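(* In the setting described in the context: (i) $\operatorname{Tr}_{K/\mathbb{Q}}(\delta_A\alpha)=1$ for each $\alpha\in\{1,\varepsilon_1,\varepsilon_1^{6n+1}\varepsilon_2,\varepsilon_1^{6n+2}\varepsilon_2,\varepsilon_1^{6n+1}\varepsilon_3,\varepsilon_1^{6n+2}\varepsilon_3,\varepsilon_2\varepsilon_3,\varepsilon_1\varepsilon_2\varepsilon_3,\rho\varepsilon_2,\rho\varepsilon_1\varepsilon_2,\gamma_{6n}\varepsilon_1,\gamma_{6n}\varepsilon_1^2,\gamma_{6n+1}\varepsilon_2\varepsilon_3,\gamma_{6n+1}\varepsilon_1\varepsilon_2\varepsilon_3\}$; (ii) for $1\le j\le 3n$, $\operatorname{Tr}_{K/\mathbb{Q}}(\delta_{B,j}^+\alpha)=1$ for each $\alpha\in\{1,\varepsilon_1,\varepsilon_1^{2j-1}\varepsilon_3,\varepsilon_1^{2j}\varepsilon_3,\gamma_{2j-2}\varepsilon_1,\gamma_{2j-2}\varepsilon_1^2,\gamma_{2j},\gamma_{2j}\varepsilon_1\}$; (iii) for $1\le j\le 3n$, $\operatorname{Tr}_{K/\mathbb{Q}}(\delta_{B,j}^-\alpha)=1$ for each $\alpha\in\{1,\varepsilon_1,\varepsilon_1^{2j-1}\varepsilon_3^{-1},\varepsilon_1^{2j}\varepsilon_3^{-1},\gamma_{2j-1},\gamma_{2j-1}\varepsilon_1,\gamma_{2j+1}\varepsilon_1^{-1},\gamma_{2j+1}\}$; (iv) for $1\le j\le 6n+1$, $\operatorname{Tr}_{K/\mathbb{Q}}(\delta_{C,j}^+\alpha)=1$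 for each $\alpha\in\{\varepsilon_1^{-1},1,\varepsilon_1^{-j}\varepsilon_2,\varepsilon_1^{-j+1}\varepsilon_2\}$; (v) for $1\le j\le 6n+1$, $\operatorname{Tr}_{K/\mathbb{Q}}(\delta_{C,j}^-\alpha)=1$ for each $\alpha\in\{1,\varepsilon_1,\varepsilon_1^{j-1}\varepsilon_2,\varepsilon_1^{j}\varepsilon_2\}$.
   Context: For integers $m\ge0$ define integers $x_m,y_m$ by $\frac{x_m+y_m\sqrt5}{2}=\big(\frac{1+\sqrt5}{2}\big)^m$. Let $n\ge0$ be an integer such that $p:=y_{12n+3}^2-1$ and $r:=x_{12n+3}^2-1$ are squarefree, and let $K=\mathbb{Q}(\sqrt5,\sqrt p)$ (note $r=5p$, so $\sqrt r\in K$). Write $X=x_{12n+3}$, $Y=y_{12n+3}$, $[a,b,c,d]:=a+b\sqrt5+c\sqrt p+d\sqrt r$, and $\varepsilon_1=\frac{3+\sqrt5}{2}$, $\varepsilon_2=Y+\sqrt p$, $\varepsilon_3=X+\sqrt r$. Define $\rho:=[\frac{X+Y}{2},0,-\frac12,\frac12]$; for $1\le j\le 6n+1$, $\gamma_j:=[\frac{y_{2j-1}X+1}{2},\frac{x_{2j-1}X-(-1)^j}{10},(-1)^j\frac{x_{2j-1}}{2},(-1)^j\frac{y_{2j-1}}{2}]$, and $\gamma_0:=\gamma_1\varepsilon_1^{-1}\varepsilon_3$. Further \[ \delta_A:=\Big[\tfrac14,-\tfrac1{20},0,-\tfrac{1}{5(X+Y)}\Big],\quad \delta_{B,j}^{\pm}:=\Big[\tfrac14,-\tfrac1{20},\pm\tfrac{X-x_{4j-1}}{20p},\mp\tfrac{X-y_{4j-1}}{4r}\Big]\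 (1\le j\le 3n), \] \[ \delta_{C,j}^{\pm}:=\Big[\tfrac14,\pm\tfrac1{20},-\tfrac{Y-y_{2j-1}}{4p},\mp\tfrac{Y-x_{2j-1}}{4r}\Big]\ (1\le j\le 6n+1). \] *)

theory Defs
  imports Complex_Main "HOL-Computational_Algebra.Squarefree"
begin

definition xy :: "nat \<Rightarrow> int \<times> int" where
  "xy m = (THE (a, b). (real_of_int a + real_of_int b * sqrt 5) / 2 = ((1 + sqrt 5) / 2) ^ m)"

definition xs :: "nat \<Rightarrow> int" where "xs m = fst (xy m)"
definition ys :: "nat \<Rightarrow> int" where "ys m = snd (xy m)"

definition XX :: "nat \<Rightarrow> int" where "XX n = xs (12 * n + 3)"
definition YY :: "nat \<Rightarrow> int" where "YY n = ys (12 * n + 3)"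
definition pp :: "nat \<Rightarrow> int" where "pp n = (YY n)\<^sup>2 - 1"
definition rr :: "nat \<Rightarrow> int" where "rr n = (XX n)\<^sup>2 - 1"

text \<open>Elements of K = Q(sqrt 5, sqrt p): (a,b,c,d) stands for a + b sqrt5 + c sqrt p + d sqrt r,
  where sqrt r = sqrt 5 * sqrt p (r = 5p).\<close>
type_synonym kel = "rat \<times> rat \<times> rat \<times> rat"

definition kmul :: "nat \<Rightarrow> kel \<Rightarrow> kel \<Rightarrow> kel" where
  "kmul n x y = (let p = rat_of_int (pp n) in
     case x of (a, b, c, d) \<Rightarrow> case y of (a', b', c', d') \<Rightarrow>
       (a*a' + 5*b*b' + p*c*c' + 5*p*d*d',
        a*b' + b*a' + p*(c*d' + d*c'),
        a*c' + c*a' + 5*(b*d' + d*b'),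
        a*d' + d*a' + b*c' + c*b'))"

definition kone :: kel where "kone = (1, 0, 0, 0)"

definition kinv :: "nat \<Rightarrow> kel \<Rightarrow> kel" where
  "kinv n x = (THE y. kmul n x y = kone)"

fun kpow :: "nat \<Rightarrow> kel \<Rightarrow> nat \<Rightarrow> kel" where
  "kpow n x 0 = kone"
| "kpow n x (Suc k) = kmul n (kpow n x k) x"

text \<open>Trace K/Q: trace of the Q-linear map (multiplication by x) in the basis 1, sqrt5, sqrt p, sqrt r.\<close>
definition ktr :: "nat \<Rightarrow> kel \<Rightarrow> rat" where
  "ktr n x = fst (kmul n x (1,0,0,0))
           + fst (snd (kmul n x (0,1,0,0)))
           + fst (snd (snd (kmul n x (0,0,1,0))))
           + snd (snd (snd (kmul n x (0,0,0,1))))"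

definition eps1 :: kel where "eps1 = (3/2, 1/2, 0, 0)"
definition eps2 :: "nat \<Rightarrow> kel" where "eps2 n = (rat_of_int (YY n), 0, 1, 0)"
definition eps3 :: "nat \<Rightarrow> kel" where "eps3 n = (rat_of_int (XX n), 0, 0, 1)"

definition rho :: "nat \<Rightarrow> kel" where
  "rho n = (rat_of_int (XX n + YY n) / 2, 0, -1/2, 1/2)"

definition gamma1 :: "nat \<Rightarrow> nat \<Rightarrow> kel" where
  "gamma1 n j = (let X = rat_of_int (XX n); x = rat_of_int (xs (2*j-1)); y = rat_of_int (ys (2*j-1));
                     s = (-1::rat) ^ j in
     ((y * X + 1) / 2, (x * X - s) / 10, s * x / 2, s * y / 2))"

definition gamma :: "nat \<Rightarrow> nat \<Rightarrow> kel" where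
  "gamma n j = (if j = 0 then kmul n (kmul n (gamma1 n 1) (kinv n eps1)) (eps3 n) else gamma1 n j)"

definition deltaA :: "nat \<Rightarrow> kel" where
  "deltaA n = (1/4, -1/20, 0, - 1 / (5 * rat_of_int (XX n + YY n)))"

text \<open>deltaB n j True = delta_{B,j}^+, deltaB n j False = delta_{B,j}^-.\<close>
definition deltaB :: "nat \<Rightarrow> nat \<Rightarrow> bool \<Rightarrow> kel" where
  "deltaB n j pl = (let s = (if pl then 1 else -1 :: rat); X = rat_of_int (XX n);
       p = rat_of_int (pp n); r = rat_of_int (rr n) in
     (1/4, -1/20, s * (X - rat_of_int (xs (4*j-1))) / (20 * p),
      - s * (X - rat_of_int (ys (4*j-1))) / (4 * r)))"

definition deltaC :: "nat \<Rightarrow> nat \<Rightarrow> bool \<Rightarrow> kel" where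
  "deltaC n j pl = (let s = (if pl then 1 else -1 :: rat); Y = rat_of_int (YY n);
       p = rat_of_int (pp n); r = rat_of_int (rr n) in
     (1/4, s / 20, - (Y - rat_of_int (ys (2*j-1))) / (4 * p),
      - s * (Y - rat_of_int (xs (2*j-1))) / (4 * r)))"

end

theory Submission
  imports Defs
begin


fun LL :: "nat \<Rightarrow> int" where
  "LL 0 = 2" | "LL (Suc 0) = 1" | "LL (Suc (Suc m)) = LL (Suc m) + LL m"
fun FF :: "nat \<Rightarrow> int" where
  "FF 0 = 0" | "FF (Suc 0) = 1" | "FF (Suc (Suc m)) = FF (Suc m) + FF m"

lemma phi_sq: "((1 + sqrt 5) / 2) ^ 2 = (1 + sqrt 5) / 2 + (1::real)"
  by (simp add: power2_eq_square field_simps)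

lemma phi_pow: "(real_of_int (LL m) + real_of_int (FF m) * sqrt 5) / 2 = ((1 + sqrt 5) / 2) ^ m"
proof (induction m rule: LL.induct)
  case 1 then show ?case by simp
next
  case 2 then show ?case by simp
next
  case (3 m)
  have "((1 + sqrt 5) / 2) ^ Suc (Suc m) = ((1 + sqrt 5) / 2) ^ Suc m + ((1 + sqrt 5) / 2) ^ m"
  proof -
    have "((1 + sqrt 5) / 2) ^ Suc (Suc m) = ((1 + sqrt 5) / 2) ^ m * ((1 + sqrt 5) / 2) ^ 2"
      by (simp add: power_add[symmetric])
    also have "\<dots> = ((1 + sqrt 5) / 2) ^ m * ((1 + sqrt 5) / 2 + 1)" by (simp only: phi_sq)
    finally show ?thesis by (simp add: algebra_simps)
  qed
  moreover have "(real_of_int (LL (Suc (Suc m))) + real_of_int (FF (Suc (Suc m))) * sqrt 5) / 2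
     = (real_of_int (LL (Suc m)) + real_of_int (FF (Suc m)) * sqrt 5) / 2 + (real_of_int (LL m) + real_of_int (FF m) * sqrt 5) / 2"
    by (simp add: add_divide_distrib algebra_simps)
  ultimately show ?case using 3 by simp
qed

lemma no_sq5: fixes a b :: int assumes "a^2 = 5 * b^2" shows "b = 0"
proof (rule ccontr)
  assume b: "b \<noteq> 0"
  have a: "a \<noteq> 0"
  proof
    assume "a = 0"
    then have "5 * b^2 = 0" using assms by simp
    then show False using b by simp
  qed
  have p: "prime (5::int)" by (rule prime_int_numeral_eq[THEN iffD2]) (simp add: prime_nat_iff' atLeastLessThan_nat_numeral)
  have 1: "multiplicity 5 (a^2) = 2 * multiplicity 5 a"
    using p a by (simp add: prime_elem_multiplicity_power_distrib)
  have 2: "multiplicity 5 (5 * b^2) = 1 + 2 * multiplicity 5 b"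
    using p b by (simp add: prime_elem_multiplicity_mult_distrib prime_elem_multiplicity_power_distrib)
  show False using assms 1 2 by presburger
qed

lemma sqrt5_indep: fixes a b :: int assumes "real_of_int a + real_of_int b * sqrt 5 = 0" shows "a = 0 \<and> b = 0"
proof -
  have "real_of_int a = - real_of_int b * sqrt 5" using assms by linarith
  then have "(real_of_int a)^2 = (real_of_int b)^2 * 5" by (simp add: power_mult_distrib)
  then have "real_of_int (a^2) = real_of_int (5 * b^2)" by simp
  then have "a^2 = 5 * b^2" by (simp only: of_int_eq_iff)
  then have "b = 0" by (rule no_sq5)
  then show ?thesis using assms by simp
qed

lemma xy_eq: "xy m = (LL m, FF m)"
  unfolding xy_def
proof (rule the_equality)
  show "case (LL m, FF m) of (a, b) \<Rightarrow> (real_of_int a + real_of_int b * sqrt 5) / 2 = ((1 + sqrt 5) / 2) ^ m"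
    using phi_pow by simp
next
  fix z assume z: "case z of (a, b) \<Rightarrow> (real_of_int a + real_of_int b * sqrt 5) / 2 = ((1 + sqrt 5) / 2) ^ m"
  obtain a b where zab: "z = (a, b)" by (cases z)
  have e: "(real_of_int a + real_of_int b * sqrt 5) / 2 = (real_of_int (LL m) + real_of_int (FF m) * sqrt 5) / 2"
    using z phi_pow[of m] unfolding zab by simp
  have "real_of_int (a - LL m) + real_of_int (b - FF m) * sqrt 5 = 0"
    using e by (simp add: algebra_simps)
  then have "a - LL m = 0 \<and> b - FF m = 0" by (rule sqrt5_indep)
  then show "z = (LL m, FF m)" using zab by simp
qed

lemma xs_eq: "xs m = LL m" and ys_eq: "ys m = FF m"
  by (simp_all add: xs_def ys_def xy_eq)



lemma LF_step: "2 * LL (Suc m) = LL m + 5 * FF m \<and> 2 * FF (Suc m) = LL m + FF m"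
  by (induction m rule: LL.induct) auto

lemma LF_add: "2 * LL (m + k) = LL k * LL m + 5 * FF k * FF m \<and> 2 * FF (m + k) = FF k * LL m + LL k * FF m"
proof (induction k rule: LL.induct)
  case 1 then show ?case by simp
next
  case 2 then show ?case using LF_step[of m] by simp
next
  case (3 k)
  have e: "m + Suc (Suc k) = Suc (Suc (m + k))" by simp
  show ?case unfolding e using 3 by (simp add: algebra_simps)
qed

lemma cassini: "LL m ^ 2 - 5 * FF m ^ 2 = 4 * (-1) ^ m"
proof (induction m)
  case 0 then show ?case by simp
next
  case (Suc m)
  have "4 * (LL (Suc m) ^ 2 - 5 * FF (Suc m) ^ 2) = (2 * LL (Suc m)) ^ 2 - 5 * (2 * FF (Suc m)) ^ 2"
    by (simp add: power2_eq_square algebra_simps)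
  also have "\<dots> = (LL m + 5 * FF m) ^ 2 - 5 * (LL m + FF m) ^ 2" using LF_step[of m] by simp
  also have "\<dots> = - 4 * (LL m ^ 2 - 5 * FF m ^ 2)" by (simp add: power2_eq_square algebra_simps)
  finally show ?case using Suc by simp
qed

definition l :: "nat \<Rightarrow> rat" where "l m = rat_of_int (LL m)"
definition f :: "nat \<Rightarrow> rat" where "f m = rat_of_int (FF m)"

lemma l_add: "l (m + k) = (l k * l m + 5 * f k * f m) / 2"
proof -
  have "rat_of_int (2 * LL (m + k)) = rat_of_int (LL k * LL m + 5 * FF k * FF m)" using LF_add by presburger
  then show ?thesis unfolding l_def f_def by simp
qed
lemma f_add: "f (m + k) = (f k * l m + l k * f m) / 2"
proof -
  have "rat_of_int (2 * FF (m + k)) = rat_of_int (FF k * LL m + LL k * FF m)" using LF_add by presburger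
  then show ?thesis unfolding l_def f_def by simp
qed
lemma cass_odd: "odd m \<Longrightarrow> l m ^ 2 - 5 * f m ^ 2 = -4"
proof -
  assume "odd m"
  then have "LL m ^ 2 - 5 * FF m ^ 2 = -4" using cassini[of m] by simp
  then have "rat_of_int (LL m ^ 2 - 5 * FF m ^ 2) = -4" by simp
  then show ?thesis unfolding l_def f_def by simp
qed
lemma cass_even: "even m \<Longrightarrow> l m ^ 2 - 5 * f m ^ 2 = 4"
proof -
  assume "even m"
  then have "LL m ^ 2 - 5 * FF m ^ 2 = 4" using cassini[of m] by simp
  then have "rat_of_int (LL m ^ 2 - 5 * FF m ^ 2) = 4" by simp
  then show ?thesis unfolding l_def f_def by simp
qed

lemma lf_small: "l 0 = 2" "f 0 = 0" "l 1 = 1" "f 1 = 1" "l 2 = 3" "f 2 = 1" "l 3 = 4" "f 3 = 2"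
  "l 4 = 7" "f 4 = 3" "l 5 = 11" "f 5 = 5" "l 6 = 18" "f 6 = 8"
  by (simp_all add: l_def f_def eval_nat_numeral)

lemma l_sh: "l (m+1) = (l m + 5 * f m) / 2" "l (m+2) = (3 * l m + 5 * f m) / 2"
  "l (m+3) = (4 * l m + 10 * f m) / 2" "l (m+4) = (7 * l m + 15 * f m) / 2"
  "l (m+5) = (11 * l m + 25 * f m) / 2" "l (m+6) = (18 * l m + 40 * f m) / 2"
  unfolding l_add lf_small by simp_all
lemma f_sh: "f (m+1) = (l m + f m) / 2" "f (m+2) = (l m + 3 * f m) / 2"
  "f (m+3) = (2 * l m + 4 * f m) / 2" "f (m+4) = (3 * l m + 7 * f m) / 2"
  "f (m+5) = (5 * l m + 11 * f m) / 2" "f (m+6) = (8 * l m + 18 * f m) / 2"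
  unfolding f_add lf_small by simp_all

lemma xs_l: "rat_of_int (xs m) = l m" and ys_f: "rat_of_int (ys m) = f m"
  by (simp_all add: xs_eq ys_eq l_def f_def)

lemma kmul_tup: "kmul n (a, b, c, d) (a', b', c', d') =
  (a*a' + 5*b*b' + rat_of_int (pp n)*c*c' + 5*rat_of_int (pp n)*d*d',
   a*b' + b*a' + rat_of_int (pp n)*(c*d' + d*c'),
   a*c' + c*a' + 5*(b*d' + d*b'),
   a*d' + d*a' + b*c' + c*b')"
  by (simp add: kmul_def Let_def)

lemma ktr_fst: "ktr n x = 4 * fst x"
  by (cases x) (simp add: ktr_def kmul_def Let_def)

lemma kmul_comm: "kmul n x y = kmul n y x"
  by (cases x, cases y) (simp add: kmul_def Let_def algebra_simps)

lemma kmul_assoc: "kmul n (kmul n x y) z = kmul n x (kmul n y z)"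
  by (cases x, cases y, cases z) (simp add: kmul_def Let_def algebra_simps)

lemma kmul_one: "kmul n x kone = x"
  by (cases x) (simp add: kmul_def kone_def Let_def)

lemma kinv_eq: assumes "kmul n x y = kone" shows "kinv n x = y"
  unfolding kinv_def
proof (rule the_equality)
  show "kmul n x y = kone" by fact
next
  fix z assume z: "kmul n x z = kone"
  have "kmul n y x = kone" using assms by (simp add: kmul_comm)
  then have "z = kmul n (kmul n y x) z" by (simp add: kmul_comm[of n kone] kmul_one)
  also have "\<dots> = kmul n y (kmul n x z)" by (simp add: kmul_assoc)
  also have "\<dots> = y" using z by (simp add: kmul_one)
  finally show "z = y" .
qed

lemma kinv_eps1: "kinv n eps1 = (3/2, -1/2, 0, 0)"
  by (rule kinv_eq) (simp add: kmul_tup eps1_def kone_def)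

lemma kpow_eps1: "kpow n eps1 k = (l (2*k) / 2, f (2*k) / 2, 0, 0)"
proof (induction k)
  case 0 then show ?case by (simp add: kone_def lf_small)
next
  case (Suc k)
  have e: "2 * Suc k = 2 * k + 2" by simp
  show ?case unfolding kpow.simps Suc.IH e l_sh f_sh by (simp add: kmul_tup eps1_def field_simps)
qed

lemma kpow_eps1inv: "kpow n (kinv n eps1) k = (l (2*k) / 2, - f (2*k) / 2, 0, 0)"
proof (induction k)
  case 0 then show ?case by (simp add: kone_def lf_small)
next
  case (Suc k)
  have e: "2 * Suc k = 2 * k + 2" by simp
  show ?case unfolding kpow.simps Suc.IH e l_sh f_sh by (simp add: kinv_eps1 kmul_tup field_simps)
qed



lemma LF_pos: "LL m \<ge> 1 \<and> FF (Suc m) \<ge> 1"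
  by (induction m rule: LL.induct) auto

lemma l_S: "l (Suc m) = (l m + 5 * f m) / 2" "l (Suc (Suc m)) = (3 * l m + 5 * f m) / 2"
  "l (Suc (Suc (Suc m))) = (4 * l m + 10 * f m) / 2" "l (Suc (Suc (Suc (Suc m)))) = (7 * l m + 15 * f m) / 2"
  "l (Suc (Suc (Suc (Suc (Suc m))))) = (11 * l m + 25 * f m) / 2"
  using l_sh[of m] by (simp_all add: eval_nat_numeral)
lemma f_S: "f (Suc m) = (l m + f m) / 2" "f (Suc (Suc m)) = (l m + 3 * f m) / 2"
  "f (Suc (Suc (Suc m))) = (2 * l m + 4 * f m) / 2" "f (Suc (Suc (Suc (Suc m)))) = (3 * l m + 7 * f m) / 2"
  "f (Suc (Suc (Suc (Suc (Suc m))))) = (5 * l m + 11 * f m) / 2"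
  using f_sh[of m] by (simp_all add: eval_nat_numeral)

definition XQ :: "nat \<Rightarrow> rat" where "XQ n = rat_of_int (XX n)"
definition YQ :: "nat \<Rightarrow> rat" where "YQ n = rat_of_int (YY n)"
definition PQ :: "nat \<Rightarrow> rat" where "PQ n = rat_of_int (pp n)"

lemma XQ_l: "XQ n = l (12*n+3)" and YQ_f: "YQ n = f (12*n+3)"
  by (simp_all add: XQ_def YQ_def XX_def YY_def xs_l ys_f)

lemma XY_cass: "XQ n ^ 2 - 5 * YQ n ^ 2 = -4"
  unfolding XQ_l YQ_f by (rule cass_odd) simp

lemma PQ_eq: "PQ n = YQ n ^ 2 - 1"
  by (simp add: PQ_def YQ_def pp_def)

lemma RQ_eq: "rat_of_int (rr n) = 5 * PQ n"
proof -
  have "rat_of_int (rr n) = XQ n ^ 2 - 1" by (simp add: XQ_def rr_def)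
  then show ?thesis using XY_cass[of n] PQ_eq[of n] by simp
qed

lemma Y_ge: "YQ n \<ge> 2"
proof -
  have e: "12*n+3 = Suc (Suc (Suc (12*n)))" by simp
  have "FF (12*n+3) \<ge> 2" unfolding e using LF_pos[of "12*n"] LF_pos[of "Suc (12*n)"] by simp
  then show ?thesis by (simp add: YQ_f f_def)
qed
lemma X_ge: "XQ n \<ge> 2"
proof -
  have e: "12*n+3 = Suc (Suc (Suc (12*n)))" by simp
  have "LL (12*n+3) \<ge> 2" unfolding e using LF_pos[of "12*n"] LF_pos[of "Suc (12*n)"] LF_pos[of "Suc (Suc (12*n))"] by simp
  then show ?thesis by (simp add: XQ_l l_def)
qed
lemma PQ_nz: "PQ n \<noteq> 0"
proof -
  have "YQ n ^ 2 \<ge> 2^2" using Y_ge[of n] by (intro power_mono) auto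
  then show ?thesis by (simp add: PQ_eq)
qed
lemma XY_nz: "XQ n + YQ n \<noteq> 0" using X_ge[of n] Y_ge[of n] by simp

lemma ktr_tup: "ktr n (kmul n (a, b, c, d) (a', b', c', d')) =
   4 * (a*a' + 5*b*b' + PQ n*c*c' + 5*PQ n*d*d')"
  by (simp add: ktr_fst kmul_tup PQ_def)

lemma kmul_tq: "kmul n (a, b, c, d) (a', b', c', d') =
  (a*a' + 5*b*b' + PQ n*c*c' + 5*PQ n*d*d',
   a*b' + b*a' + PQ n*(c*d' + d*c'),
   a*c' + c*a' + 5*(b*d' + d*b'),
   a*d' + d*a' + b*c' + c*b')"
  by (simp add: kmul_tup PQ_def)

lemma kinv_eps3: "kinv n (eps3 n) = (XQ n, 0, 0, -1)"
  by (rule kinv_eq) (simp add: kmul_tup eps3_def kone_def XQ_def[symmetric] PQ_def[symmetric] RQ_eq[symmetric] rr_def power2_eq_square)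

lemma kinv_eps3_t: "kinv n (XQ n, 0, 0, 1) = (XQ n, 0, 0, -1)"
  using kinv_eps3[of n] by (simp add: eps3_def XQ_def)

lemma eps2_t: "eps2 n = (YQ n, 0, 1, 0)" by (simp add: eps2_def YQ_def)
lemma eps3_t: "eps3 n = (XQ n, 0, 0, 1)" by (simp add: eps3_def XQ_def)

lemma deltaC_t: "deltaC n j pl = (let s = (if pl then 1 else -1 :: rat) in
     (1/4, s / 20, - (YQ n - f (2*j-1)) / (4 * PQ n), - s * (YQ n - l (2*j-1)) / (4 * (5 * PQ n))))"
  by (simp add: deltaC_def Let_def YQ_def PQ_def[symmetric] RQ_eq xs_l ys_f)

lemma partCm: assumes j: "1 \<le> j"
  shows "\<forall>\<alpha> \<in> {kone, eps1,
         kmul n (kpow n eps1 (j-1)) (eps2 n), kmul n (kpow n eps1 j) (eps2 n)}.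
        ktr n (kmul n (deltaC n j False) \<alpha>) = 1"
proof -
  obtain b where b: "b = 2*j-2" by blast
  have i1: "2*j-1 = Suc b" "2*(j-1) = b" "2*j = Suc (Suc b)" using b j by auto
  have ev: "even b" using b j by presburger
  have c: "l b ^ 2 - 5 * f b ^ 2 = 4" using cass_even[OF ev] .
  have pnz: "PQ n \<noteq> 0" by (rule PQ_nz)
  show ?thesis
    unfolding deltaC_t kpow_eps1 eps2_t i1
    using pnz apply (simp add: Let_def ktr_fst kone_def eps1_def kmul_tq l_S f_S)
    using c apply (simp add: field_simps)
    apply algebra
    done
qed

lemma partCp: assumes j: "1 \<le> j"
  shows "\<forall>\<alpha> \<in> {kinv n eps1, kone,
         kmul n (kpow n (kinv n eps1) j) (eps2 n), kmul n (kpow n (kinv n eps1) (j-1)) (eps2 n)}.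
        ktr n (kmul n (deltaC n j True) \<alpha>) = 1"
proof -
  obtain b where b: "b = 2*j-2" by blast
  have i1: "2*j-1 = Suc b" "2*(j-1) = b" "2*j = Suc (Suc b)" using b j by auto
  have ev: "even b" using b j by presburger
  have c: "l b ^ 2 - 5 * f b ^ 2 = 4" using cass_even[OF ev] .
  have pnz: "PQ n \<noteq> 0" by (rule PQ_nz)
  show ?thesis
    unfolding deltaC_t kpow_eps1inv eps2_t i1
    using pnz apply (simp add: Let_def ktr_fst kone_def kinv_eps1 kmul_tq l_S f_S)
    using c apply (simp add: field_simps)
    apply algebra
    done
qed

lemma deltaB_t: "deltaB n j pl = (let s = (if pl then 1 else -1 :: rat) in
     (1/4, -1/20, s * (XQ n - l (4*j-1)) / (20 * PQ n), - s * (XQ n - f (4*j-1)) / (4 * (5 * PQ n))))"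
  by (simp add: deltaB_def Let_def XQ_def PQ_def[symmetric] RQ_eq xs_l ys_f)

lemma gamma1_t: "gamma1 n j = ((f (2*j-1) * XQ n + 1) / 2, (l (2*j-1) * XQ n - (-1)^j) / 10,
     (-1)^j * l (2*j-1) / 2, (-1)^j * f (2*j-1) / 2)"
  by (simp add: gamma1_def Let_def XQ_def xs_l ys_f)

lemma partBp_main: assumes j: "1 \<le> j"
  shows "\<forall>\<alpha> \<in> {kone, eps1,
         kmul n (kpow n eps1 (2*j-1)) (eps3 n), kmul n (kpow n eps1 (2*j)) (eps3 n),
         gamma n (2*j), kmul n (gamma n (2*j)) eps1}.
        ktr n (kmul n (deltaB n j True) \<alpha>) = 1"
proof -
  obtain b where b: "b = 4*j-3" by blast
  have i1: "4*j-1 = Suc (Suc b)" "2*(2*j-1) = Suc b" "2*(2*j) = Suc (Suc (Suc b))" "2*(2*j)-1 = Suc (Suc b)"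
    using b j by auto
  have g: "gamma n (2*j) = gamma1 n (2*j)" using j by (simp add: gamma_def)
  have od: "odd b" using b j by presburger
  have c: "l b ^ 2 - 5 * f b ^ 2 = -4" using cass_odd[OF od] .
  have pnz: "PQ n \<noteq> 0" by (rule PQ_nz)
  show ?thesis
    unfolding deltaB_t kpow_eps1 eps3_t g gamma1_t i1
    using pnz apply (simp add: Let_def ktr_fst kone_def eps1_def kmul_tq l_S f_S)
    using c XY_cass[of n] apply (simp add: field_simps)
    apply algebra
    done
qed

lemma partBm: assumes j: "1 \<le> j"
  shows "\<forall>\<alpha> \<in> {kone, eps1,
         kmul n (kpow n eps1 (2*j-1)) (kinv n (eps3 n)), kmul n (kpow n eps1 (2*j)) (kinv n (eps3 n)),
         gamma n (2*j-1), kmul n (gamma n (2*j-1)) eps1,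
         kmul n (gamma n (2*j+1)) (kinv n eps1), gamma n (2*j+1)}.
        ktr n (kmul n (deltaB n j False) \<alpha>) = 1"
proof -
  obtain b where b: "b = 4*j-3" by blast
  have i1: "4*j-1 = Suc (Suc b)" "2*(2*j-1) = Suc b" "2*(2*j) = Suc (Suc (Suc b))" "2*(2*j-1)-1 = b"
     "2*(2*j+1)-1 = Suc (Suc (Suc (Suc b)))"
    using b j by auto
  have g: "gamma n (2*j-1) = gamma1 n (2*j-1)" "gamma n (2*j+1) = gamma1 n (2*j+1)" using j by (simp_all add: gamma_def)
  have sg: "(-1::rat)^(2*j-1) = -1" "(-1::rat)^(2*j+1) = -1" using j by (simp_all add: power_minus_odd odd_pos)
  have od: "odd b" using b j by presburger
  have c: "l b ^ 2 - 5 * f b ^ 2 = -4" using cass_odd[OF od] .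
  have pnz: "PQ n \<noteq> 0" by (rule PQ_nz)
  show ?thesis
    unfolding deltaB_t kpow_eps1 eps3_t g gamma1_t i1 kinv_eps3_t kinv_eps1 sg
    using pnz apply (simp add: Let_def ktr_fst kone_def eps1_def kmul_tq l_S f_S)
    using c XY_cass[of n] apply (simp add: field_simps)
    apply algebra
    done
qed

lemma kinv_eps1_t: "kinv n (3/2, 1/2, 0, 0) = (3/2, -1/2, 0, 0)"
  using kinv_eps1[of n] by (simp add: eps1_def)
lemma lf_one: "l (Suc 0) = 1" "f (Suc 0) = 1" using lf_small by simp_all

lemma gamma0_t: "gamma n 0 = kmul n (kmul n (gamma1 n 1) (kinv n eps1)) (eps3 n)"
  by (simp add: gamma_def)

lemma partBp_g: assumes j: "1 \<le> j"
  shows "\<forall>\<alpha> \<in> {kmul n (gamma n (2*j-2)) eps1, kmul n (gamma n (2*j-2)) (kpow n eps1 2)}.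
        ktr n (kmul n (deltaB n j True) \<alpha>) = 1"
proof (cases "j = 1")
  case True
  have pnz: "PQ n \<noteq> 0" by (rule PQ_nz)
  show ?thesis
    unfolding True deltaB_t kpow_eps1
    using pnz apply (simp add: Let_def ktr_fst kone_def eps1_def kmul_tq lf_small gamma0_t gamma1_t kinv_eps1_t eps3_t lf_one)
    using XY_cass[of n] PQ_eq[of n] apply (simp add: field_simps)
    apply algebra
    done
next
  case False
  then have j2: "2 \<le> j" using j by simp
  obtain b where b: "b = 4*j-5" by blast
  have i1: "4*j-1 = Suc (Suc (Suc (Suc b)))" "2*(2*j-2)-1 = b"
    using b j2 by auto
  have g: "gamma n (2*j-2) = gamma1 n (2*j-2)" using j2 by (simp add: gamma_def)
  have sg: "(-1::rat)^(2*j-2) = 1" using j2 by (simp add: power_minus_even)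
  have od: "odd b" using b j2 by presburger
  have c: "l b ^ 2 - 5 * f b ^ 2 = -4" using cass_odd[OF od] .
  have pnz: "PQ n \<noteq> 0" by (rule PQ_nz)
  show ?thesis
    unfolding deltaB_t kpow_eps1 g gamma1_t i1 sg
    using pnz apply (simp add: Let_def ktr_fst kone_def eps1_def kmul_tq l_S f_S lf_small)
    using c XY_cass[of n] apply (simp add: field_simps)
    apply algebra
    done
qed

lemma deltaA_t: "deltaA n = (1/4, -1/20, 0, - 1 / (5 * (XQ n + YQ n)))"
  by (simp add: deltaA_def XQ_def YQ_def)

lemma rho_t: "rho n = ((XQ n + YQ n) / 2, 0, -1/2, 1/2)"
  by (simp add: rho_def XQ_def YQ_def)

lemma partA_main:
  shows "\<forall>\<alpha> \<in> {kone, eps1,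
        kmul n (kpow n eps1 (6*n+1)) (eps2 n), kmul n (kpow n eps1 (6*n+2)) (eps2 n),
        kmul n (kpow n eps1 (6*n+1)) (eps3 n), kmul n (kpow n eps1 (6*n+2)) (eps3 n),
        kmul n (eps2 n) (eps3 n), kmul n (kmul n eps1 (eps2 n)) (eps3 n),
        kmul n (rho n) (eps2 n), kmul n (kmul n (rho n) eps1) (eps2 n),
        kmul n (kmul n (gamma n (6*n+1)) (eps2 n)) (eps3 n),
        kmul n (kmul n (kmul n (gamma n (6*n+1)) eps1) (eps2 n)) (eps3 n)}.
      ktr n (kmul n (deltaA n) \<alpha>) = 1"
proof -
  obtain b where b: "b = 12*n+1" by blast
  have i1: "2*(6*n+1) = Suc b" "2*(6*n+2) = Suc (Suc (Suc b))" "2*(6*n+1)-1 = b"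
    using b by auto
  have e: "12*n+3 = Suc (Suc b)" using b by simp
  have xq: "XQ n = l (Suc (Suc b))" and yq: "YQ n = f (Suc (Suc b))" unfolding XQ_l YQ_f e by simp_all
  have g: "gamma n (6*n+1) = gamma1 n (6*n+1)" by (simp add: gamma_def)
  have sg: "(-1::rat)^(6*n+1) = -1" by (simp add: power_minus_odd)
  have od: "odd b" using b by presburger
  have c: "l b ^ 2 - 5 * f b ^ 2 = -4" using cass_odd[OF od] .
  have pq: "PQ n = YQ n ^ 2 - 1" by (rule PQ_eq)
  have nz: "XQ n + YQ n \<noteq> 0" by (rule XY_nz)
  show ?thesis
    unfolding deltaA_t kpow_eps1 eps2_t eps3_t rho_t g gamma1_t i1 sg pq
    using nz apply (simp add: Let_def ktr_fst kone_def eps1_def kmul_tq PQ_eq xq yq l_S f_S)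
    using c apply (simp add: field_simps)
    apply algebra
    done
qed

lemma partA_g:
  shows "\<forall>\<alpha> \<in> {kmul n (gamma n (6*n)) eps1, kmul n (gamma n (6*n)) (kpow n eps1 2)}.
      ktr n (kmul n (deltaA n) \<alpha>) = 1"
proof (cases "n = 0")
  case True
  have xq: "XQ 0 = 4" and yq: "YQ 0 = 2" by (simp_all add: XQ_l YQ_f lf_small)
  show ?thesis
    unfolding True deltaA_t kpow_eps1 PQ_eq
    by (simp add: Let_def ktr_fst kone_def eps1_def kmul_tq PQ_eq lf_small xq yq gamma0_t gamma1_t kinv_eps1_t eps3_t lf_one)
next
  case False
  obtain b where b: "b = 12*n-1" by blast
  have i1: "2*(6*n)-1 = b" using b by auto
  have xq: "XQ n = l (Suc (Suc (Suc (Suc b))))" and yq: "YQ n = f (Suc (Suc (Suc (Suc b))))"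
    using b False by (simp_all add: XQ_l YQ_f eval_nat_numeral)
  have g: "gamma n (6*n) = gamma1 n (6*n)" using False by (simp add: gamma_def)
  have sg: "(-1::rat)^(6*n) = 1" by (simp add: power_minus_even)
  have od: "odd b" using b False by presburger
  have c: "l b ^ 2 - 5 * f b ^ 2 = -4" using cass_odd[OF od] .
  have pq: "PQ n = YQ n ^ 2 - 1" by (rule PQ_eq)
  have nz: "XQ n + YQ n \<noteq> 0" by (rule XY_nz)
  show ?thesis
    unfolding deltaA_t kpow_eps1 g gamma1_t i1 sg pq
    using nz apply (simp add: Let_def ktr_fst kone_def eps1_def kmul_tq PQ_eq xq yq l_S f_S lf_small)
    using c apply (simp add: field_simps)
    apply algebra
    done
qed


theorem proposition4p3:
  fixes n :: nat
  assumes "squarefree (pp n)" and "squarefree (rr n)"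
  shows
   "(\<forall>\<alpha> \<in> {kone, eps1,
        kmul n (kpow n eps1 (6*n+1)) (eps2 n), kmul n (kpow n eps1 (6*n+2)) (eps2 n),
        kmul n (kpow n eps1 (6*n+1)) (eps3 n), kmul n (kpow n eps1 (6*n+2)) (eps3 n),
        kmul n (eps2 n) (eps3 n), kmul n (kmul n eps1 (eps2 n)) (eps3 n),
        kmul n (rho n) (eps2 n), kmul n (kmul n (rho n) eps1) (eps2 n),
        kmul n (gamma n (6*n)) eps1, kmul n (gamma n (6*n)) (kpow n eps1 2),
        kmul n (kmul n (gamma n (6*n+1)) (eps2 n)) (eps3 n),
        kmul n (kmul n (kmul n (gamma n (6*n+1)) eps1) (eps2 n)) (eps3 n)}.
      ktr n (kmul n (deltaA n) \<alpha>) = 1)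
  \<and> (\<forall>j. 1 \<le> j \<and> j \<le> 3*n \<longrightarrow>
      (\<forall>\<alpha> \<in> {kone, eps1,
         kmul n (kpow n eps1 (2*j-1)) (eps3 n), kmul n (kpow n eps1 (2*j)) (eps3 n),
         kmul n (gamma n (2*j-2)) eps1, kmul n (gamma n (2*j-2)) (kpow n eps1 2),
         gamma n (2*j), kmul n (gamma n (2*j)) eps1}.
        ktr n (kmul n (deltaB n j True) \<alpha>) = 1))
  \<and> (\<forall>j. 1 \<le> j \<and> j \<le> 3*n \<longrightarrow>
      (\<forall>\<alpha> \<in> {kone, eps1,
         kmul n (kpow n eps1 (2*j-1)) (kinv n (eps3 n)), kmul n (kpow n eps1 (2*j)) (kinv n (eps3 n)),
         gamma n (2*j-1), kmul n (gamma n (2*j-1)) eps1,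
         kmul n (gamma n (2*j+1)) (kinv n eps1), gamma n (2*j+1)}.
        ktr n (kmul n (deltaB n j False) \<alpha>) = 1))
  \<and> (\<forall>j. 1 \<le> j \<and> j \<le> 6*n+1 \<longrightarrow>
      (\<forall>\<alpha> \<in> {kinv n eps1, kone,
         kmul n (kpow n (kinv n eps1) j) (eps2 n), kmul n (kpow n (kinv n eps1) (j-1)) (eps2 n)}.
        ktr n (kmul n (deltaC n j True) \<alpha>) = 1))
  \<and> (\<forall>j. 1 \<le> j \<and> j \<le> 6*n+1 \<longrightarrow>
      (\<forall>\<alpha> \<in> {kone, eps1,
         kmul n (kpow n eps1 (j-1)) (eps2 n), kmul n (kpow n eps1 j) (eps2 n)}.
        ktr n (kmul n (deltaC n j False) \<alpha>) = 1))"
  proof -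
  have A1: "\<forall>\<alpha> \<in> {kone, eps1,
        kmul n (kpow n eps1 (6*n+1)) (eps2 n), kmul n (kpow n eps1 (6*n+2)) (eps2 n),
        kmul n (kpow n eps1 (6*n+1)) (eps3 n), kmul n (kpow n eps1 (6*n+2)) (eps3 n),
        kmul n (eps2 n) (eps3 n), kmul n (kmul n eps1 (eps2 n)) (eps3 n),
        kmul n (rho n) (eps2 n), kmul n (kmul n (rho n) eps1) (eps2 n),
        kmul n (kmul n (gamma n (6*n+1)) (eps2 n)) (eps3 n),
        kmul n (kmul n (kmul n (gamma n (6*n+1)) eps1) (eps2 n)) (eps3 n)}.
      ktr n (kmul n (deltaA n) \<alpha>) = 1" by (rule partA_main)
  have A2: "\<forall>\<alpha> \<in> {kmul n (gamma n (6*n)) eps1, kmul n (gamma n (6*n)) (kpow n eps1 2)}.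
      ktr n (kmul n (deltaA n) \<alpha>) = 1" by (rule partA_g)
  show ?thesis
  proof (intro conjI allI impI)
    show "\<forall>\<alpha> \<in> {kone, eps1,
        kmul n (kpow n eps1 (6*n+1)) (eps2 n), kmul n (kpow n eps1 (6*n+2)) (eps2 n),
        kmul n (kpow n eps1 (6*n+1)) (eps3 n), kmul n (kpow n eps1 (6*n+2)) (eps3 n),
        kmul n (eps2 n) (eps3 n), kmul n (kmul n eps1 (eps2 n)) (eps3 n),
        kmul n (rho n) (eps2 n), kmul n (kmul n (rho n) eps1) (eps2 n),
        kmul n (gamma n (6*n)) eps1, kmul n (gamma n (6*n)) (kpow n eps1 2),
        kmul n (kmul n (gamma n (6*n+1)) (eps2 n)) (eps3 n),
        kmul n (kmul n (kmul n (gamma n (6*n+1)) eps1) (eps2 n)) (eps3 n)}.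
      ktr n (kmul n (deltaA n) \<alpha>) = 1"
      using A1 A2 by (simp only: ball_simps)
  next
    fix j :: nat assume j: "1 \<le> j \<and> j \<le> 3*n"
    show "\<forall>\<alpha> \<in> {kone, eps1,
         kmul n (kpow n eps1 (2*j-1)) (eps3 n), kmul n (kpow n eps1 (2*j)) (eps3 n),
         kmul n (gamma n (2*j-2)) eps1, kmul n (gamma n (2*j-2)) (kpow n eps1 2),
         gamma n (2*j), kmul n (gamma n (2*j)) eps1}.
        ktr n (kmul n (deltaB n j True) \<alpha>) = 1"
      using partBp_main[of j n] partBp_g[of j n] j by (simp only: ball_simps simp_thms)
  next
    fix j :: nat assume j: "1 \<le> j \<and> j \<le> 3*n"
    then show "\<forall>\<alpha> \<in> {kone, eps1,
         kmul n (kpow n eps1 (2*j-1)) (kinv n (eps3 n)), kmul n (kpow n eps1 (2*j)) (kinv n (eps3 n)),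
         gamma n (2*j-1), kmul n (gamma n (2*j-1)) eps1,
         kmul n (gamma n (2*j+1)) (kinv n eps1), gamma n (2*j+1)}.
        ktr n (kmul n (deltaB n j False) \<alpha>) = 1"
      using partBm[of j n] by blast
  next
    fix j :: nat assume j: "1 \<le> j \<and> j \<le> 6*n+1"
    then show "\<forall>\<alpha> \<in> {kinv n eps1, kone,
         kmul n (kpow n (kinv n eps1) j) (eps2 n), kmul n (kpow n (kinv n eps1) (j-1)) (eps2 n)}.
        ktr n (kmul n (deltaC n j True) \<alpha>) = 1"
      using partCp[of j n] by blast
  next
    fix j :: nat assume j: "1 \<le> j \<and> j \<le> 6*n+1"
    then show "\<forall>\<alpha> \<in> {kone, eps1,
         kmul n (kpow n eps1 (j-1)) (eps2 n), kmul n (kpow n eps1 j) (eps2 n)}.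
        ktr n (kmul n (deltaC n j False) \<alpha>) = 1"
      using partCm[of j n] by blast
  qed
qed

end
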